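(* Let $G^{(1)},\dots,G^{(\ell)}$ be directed graphs on a common node set $V$ and run SKIM (described in the context) with sketch parameter $k$. Consider any iteration of SKIM, and let $v$ be the seed node selected in that iteration, with threshold rank $\tau_v$ (the $k$th smallest rank in its partial sketch at selection time). Then, at the end of that iteration (after the residual update), for every node $u$ not in the seed set, the updated partial sketch $X_u$ is equal to the set of entries of the combined reachability sketch $X'_u$ of $u$ in the residual problem that have rank value at most $\tau_v$.
   Context: Each node-instance pair $(z,i)$ ($z\in V$, $i\in[\ell]$) has an independent uniform random rank $r^{(i)}_z\in[0,1]$. The residual problem after an iteration is obtained from the instances by removing all covered node-instance pairs (pairs $(z,i)$ such that $z$ is reachable in $G^{(i)}$ from some already selected seed). In the residual problem, the combined reachability sketch $X'_u$ of $u$ is the set of the $k$ smallest ranks $r^{(i)}_z$ over pairs $(z,i)$ such that $z$ is reachable from $u$ in the residual instance $i$ (the graph $G^{(i)}$ restricted to its uncovered nodes), with $u$ reaching itself. SKIM with parameter $k$: maintain a set of covered pairs (initially empty), a partial sketch $X_w$ (set of ranks, initially empty) for every node $w$, and a list of seeds. Repeat: (1) process uncovered pairs $(u,i)$ in increasing rank order, continuing from where the previous iteration stopped; for each, do a reverse reachability search from $u$ in $G^{(i)}$ restricted to uncovered pairs of instance $i$, inserting $r^{(i)}_u$ into $X_w$ for every visited node $w$; stop as soon as some node $x$ has $|X_x|=k$, and select $x$ as the next seed (if all pairs are exhausted, select a node of maximum $|X_x|$). (2) For each instance $i$, do a forward reachability search from $x$ in $G^{(i)}$ pruning at covered pairs,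 mark the reached pairs as covered, and remove their ranks from all partial sketches ($X_u\leftarrow X_u\setminus X_x$). *)

theory Defs
  imports Complex_Main
begin

(* Nodes have type 'v, the common node set is V, instances are 0..<l,
   instance i has directed edge set E i ((a,b) means an edge a -> b),
   r z i is the rank of the node-instance pair (z,i). *)

record ('v) skim_state =
  covered   :: "('v \<times> nat) set"
  processed :: "('v \<times> nat) set"
  sketch    :: "'v \<Rightarrow> real set"
  seeds     :: "'v list"

(* z is reachable from u in the residual instance i, i.e. in G^(i) restricted
   to the nodes w with (w,i) uncovered; u reaches itself if (u,i) is uncovered. *)
definition res_reach ::
  "'v set \<Rightarrow> (nat \<Rightarrow> ('v \<times> 'v) set) \<Rightarrow> ('v \<times> nat) set \<Rightarrow> nat \<Rightarrow> 'v \<Rightarrow> 'v \<Rightarrow> bool" where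
  "res_reach V E C i u z \<longleftrightarrow>
     u \<in> V \<and> (u, i) \<notin> C \<and> (u, z) \<in> (Restr (E i) {w \<in> V. (w, i) \<notin> C})\<^sup>*"

definition bottom_k :: "nat \<Rightarrow> real set \<Rightarrow> real set" where
  "bottom_k k S = {x \<in> S. card {y \<in> S. y < x} < k}"

definition kth_smallest :: "nat \<Rightarrow> real set \<Rightarrow> real" where
  "kth_smallest k S = (THE x. x \<in> S \<and> card {y \<in> S. y < x} = k - 1)"

definition combined_sketch ::
  "'v set \<Rightarrow> (nat \<Rightarrow> ('v \<times> 'v) set) \<Rightarrow> nat \<Rightarrow> ('v \<Rightarrow> nat \<Rightarrow> real) \<Rightarrow> nat
   \<Rightarrow> ('v \<times> nat) set \<Rightarrow> 'v \<Rightarrow> real set" where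
  "combined_sketch V E l r k C u =
     bottom_k k {r z i | z i. i < l \<and> res_reach V E C i u z}"

definition skim_init :: "'v skim_state" where
  "skim_init = \<lparr>covered = {}, processed = {}, sketch = (\<lambda>_. {}), seeds = []\<rparr>"

definition avail :: "'v set \<Rightarrow> nat \<Rightarrow> 'v skim_state \<Rightarrow> ('v \<times> nat) set" where
  "avail V l s = {(u, i). u \<in> V \<and> i < l \<and> (u, i) \<notin> covered s \<and> (u, i) \<notin> processed s}"

(* processing one pair (u,i) in step (1): it is the available pair of minimum rank
   (i.e. processing continues in increasing rank order); the reverse search from u
   in the residual instance i inserts r u i into X_w of every visited node w *)
definition process_pair ::
  "'v set \<Rightarrow> (nat \<Rightarrow> ('v \<times> 'v) set) \<Rightarrow> nat \<Rightarrow> ('v \<Rightarrow> nat \<Rightarrow> real)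
   \<Rightarrow> 'v skim_state \<Rightarrow> 'v skim_state \<Rightarrow> bool" where
  "process_pair V E l r s s' \<longleftrightarrow>
     (\<exists>u i. (u, i) \<in> avail V l s \<and>
        (\<forall>(z, j) \<in> avail V l s. r u i \<le> r z j) \<and>
        s' = s\<lparr>processed := insert (u, i) (processed s),
               sketch := (\<lambda>w. if res_reach V E (covered s) i w u
                                then insert (r u i) (sketch s w) else sketch s w)\<rparr>)"

(* step (1) of an iteration: scan s s1 x reg means that, starting in state s,
   processing pairs leads to state s1 where x is selected as seed;
   reg = True: selected because |X_x| = k; reg = False: all pairs exhausted and
   x has maximum |X_x|. *)
inductive skim_scan ::
  "'v set \<Rightarrow> (nat \<Rightarrow> ('v \<times> 'v) set) \<Rightarrow> nat \<Rightarrow> ('v \<Rightarrow> nat \<Rightarrow> real) \<Rightarrow> nat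
   \<Rightarrow> 'v skim_state \<Rightarrow> 'v skim_state \<Rightarrow> 'v \<Rightarrow> bool \<Rightarrow> bool"
  for V E l r k where
  scan_select: "\<lbrakk> x \<in> V; card (sketch s x) = k \<rbrakk> \<Longrightarrow> skim_scan V E l r k s s x True"
| scan_step: "\<lbrakk> \<forall>w\<in>V. card (sketch s w) < k; process_pair V E l r s s1;
                 skim_scan V E l r k s1 s2 x b \<rbrakk> \<Longrightarrow> skim_scan V E l r k s s2 x b"
| scan_exhausted: "\<lbrakk> \<forall>w\<in>V. card (sketch s w) < k; avail V l s = {}; x \<in> V;
                      \<forall>w\<in>V. card (sketch s w) \<le> card (sketch s x) \<rbrakk>
                    \<Longrightarrow> skim_scan V E l r k s s x False"

definition residual_update ::
  "'v set \<Rightarrow> (nat \<Rightarrow> ('v \<times> 'v) set) \<Rightarrow> nat \<Rightarrow> 'v skim_state \<Rightarrow> 'v \<Rightarrow> 'v skim_state" where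
  "residual_update V E l s x =
     s\<lparr>covered := covered s \<union> {(z, i). i < l \<and> res_reach V E (covered s) i x z},
       sketch := (\<lambda>u. sketch s u - sketch s x),
       seeds := seeds s @ [x]\<rparr>"

inductive skim_reachable ::
  "'v set \<Rightarrow> (nat \<Rightarrow> ('v \<times> 'v) set) \<Rightarrow> nat \<Rightarrow> ('v \<Rightarrow> nat \<Rightarrow> real) \<Rightarrow> nat
   \<Rightarrow> 'v skim_state \<Rightarrow> bool"
  for V E l r k where
  reach_init: "skim_reachable V E l r k skim_init"
| reach_iter: "\<lbrakk> skim_reachable V E l r k s; skim_scan V E l r k s s1 x b \<rbrakk>
               \<Longrightarrow> skim_reachable V E l r k (residual_update V E l s1 x)"

end

theory Submission imports Defs begin

lemma rr_not_cov: "res_reach V E C i u z \<Longrightarrow> (z,i) \<notin> C \<and> z \<in> V"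
  unfolding res_reach_def by (auto elim: rtranclE)

lemma rr_mono:
  assumes "C \<subseteq> C'" "res_reach V E C' i w z" shows "res_reach V E C i w z"
proof -
  have "Restr (E i) {w\<in>V. (w,i)\<notin>C'} \<subseteq> Restr (E i) {w\<in>V. (w,i)\<notin>C}" using assms(1) by auto
  then show ?thesis using assms unfolding res_reach_def using rtrancl_mono by blast
qed

lemma rr_trans: "res_reach V E C i x y \<Longrightarrow> (y,z) \<in> (Restr (E i) {w\<in>V. (w,i)\<notin>C})\<^sup>* \<Longrightarrow> res_reach V E C i x z"
  unfolding res_reach_def by auto

lemma rr_residual:
  assumes rr: "res_reach V E C i w z"
    and nz: "(z,i) \<notin> C \<union> {(z,i). i<l \<and> res_reach V E C i x z}" and il: "i < l"
  shows "res_reach V E (C \<union> {(z,i). i<l \<and> res_reach V E C i x z}) i w z"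
proof -
  define N where "N = {(z,i). i<l \<and> res_reach V E C i x z}"
  define R where "R = Restr (E i) {w\<in>V. (w,i)\<notin>C}"
  define R' where "R' = Restr (E i) {w\<in>V. (w,i)\<notin>C \<union> N}"
  have w: "w \<in> V" "(w,i) \<notin> C" "(w,z) \<in> R\<^sup>*" using rr unfolding res_reach_def R_def by auto
  have key: "(w,y) \<in> R\<^sup>* \<Longrightarrow> \<not> res_reach V E C i x y \<longrightarrow> (w,y) \<in> R'\<^sup>*" for y
  proof (induction rule: rtrancl_induct)
    case base then show ?case by simp
  next
    case (step y y')
    show ?case
    proof
      assume n': "\<not> res_reach V E C i x y'"
      have n: "\<not> res_reach V E C i x y"
        using n' rr_trans[of V E C i x y y'] step(2) unfolding R_def by auto
      have "(y,y') \<in> R'" using step(2) n n' il unfolding R_def R'_def N_def by auto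
      then show "(w,y') \<in> R'\<^sup>*" using step(3) n by auto
    qed
  qed
  have nz': "\<not> res_reach V E C i x z" using nz il by auto
  have "(w,z) \<in> R'\<^sup>*" using key w(3) nz' by auto
  moreover have "(w,i) \<notin> N" using nz' rr_trans[of V E C i x w z] w(3) unfolding N_def R_def by auto
  ultimately show ?thesis using w unfolding res_reach_def R'_def N_def by auto
qed

lemma kth_max:
  assumes "finite S" "card S = k" "k \<ge> 1"
  shows "kth_smallest k S = Max S"
proof -
  have ne: "S \<noteq> {}" using assms by auto
  have M: "Max S \<in> S" using assms ne by auto
  have eq: "{y\<in>S. y < Max S} = S - {Max S}" using assms(1) ne by (auto, metis Max_ge antisym_conv1)
  have c1: "card {y\<in>S. y < Max S} = k - 1" using eq M assms by simp
  show ?thesis unfolding kth_smallest_def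
  proof (rule the_equality)
    show "Max S \<in> S \<and> card {y \<in> S. y < Max S} = k - 1" using M c1 by simp
  next
    fix x assume x: "x \<in> S \<and> card {y \<in> S. y < x} = k - 1"
    show "x = Max S"
    proof (rule ccontr)
      assume ne2: "x \<noteq> Max S"
      have sub: "{y\<in>S. y<x} \<subseteq> S - {x, Max S}" using x assms(1) by (auto, metis Max_ge not_le)
      have c2: "card {x, Max S} = 2" using ne2 by simp
      have "card (S - {x, Max S}) = k - 2" using assms c2 M x by (simp add: card_Diff_subset)
      moreover have "card {x, Max S} \<le> card S" using M x assms(1) by (intro card_mono) auto
      ultimately have "card {y\<in>S. y<x} \<le> k - 2" "k \<ge> 2"
        using card_mono[OF _ sub] assms c2 by auto
      then show False using x by simp
    qed
  qed
qed


definition inv123 where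
  "inv123 V E l r s \<longleftrightarrow> processed s \<subseteq> V \<times> {..<l} \<and>
    (\<forall>w. sketch s w = (\<lambda>(z,j). r z j) ` {(z,j) \<in> processed s. (z,j) \<notin> covered s \<and> res_reach V E (covered s) j w z}) \<and>
    (\<forall>p\<in>processed s. \<forall>q\<in>avail V l s. (\<lambda>(z,j). r z j) p \<le> (\<lambda>(z,j). (r::'a\<Rightarrow>nat\<Rightarrow>real) z j) q)"

definition Hk where
  "Hk V k s \<longleftrightarrow> (\<forall>w\<in>V. k \<le> card (sketch s w) \<longrightarrow> card (sketch s w) = k \<and>
      (\<forall>w'\<in>V. \<forall>\<rho>\<in>sketch s w'. \<rho> \<le> Max (sketch s w)))"

lemma inv_fin: assumes "inv123 V E l r s" "finite V" shows "finite (sketch s w)"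
proof -
  have "sketch s w \<subseteq> (\<lambda>(z,j). r z j) ` processed s" using assms(1) unfolding inv123_def by blast
  moreover have "finite (processed s)" using assms unfolding inv123_def
    by (meson finite_SigmaI finite_lessThan finite_subset)
  ultimately show ?thesis by (meson finite_imageI finite_subset)
qed

lemma process_inv:
  assumes fin: "finite V" and inv: "inv123 V E l r s" and lt: "\<forall>w\<in>V. card (sketch s w) < k"
    and pp: "process_pair V E l r s s1"
  shows "inv123 V E l r s1 \<and> covered s1 = covered s \<and> Hk V k s1"
proof -
  from pp obtain u i where ui: "(u,i) \<in> avail V l s" and mn: "\<forall>(z, j) \<in> avail V l s. r u i \<le> r z j"
    and s1: "s1 = s\<lparr>processed := insert (u, i) (processed s),
               sketch := (\<lambda>w. if res_reach V E (covered s) i w u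
                                then insert (r u i) (sketch s w) else sketch s w)\<rparr>"
    unfolding process_pair_def by blast
  have cov: "covered s1 = covered s" using s1 by simp
  have P1: "processed s1 = insert (u,i) (processed s)" using s1 by simp
  have X1: "\<And>w. sketch s1 w = (if res_reach V E (covered s) i w u then insert (r u i) (sketch s w) else sketch s w)"
    using s1 by simp
  have av: "avail V l s1 \<subseteq> avail V l s" unfolding avail_def using s1 by auto
  have I1: "processed s \<subseteq> V \<times> {..<l}" and
    I2: "\<And>w. sketch s w = (\<lambda>(z,j). r z j) ` {(z,j) \<in> processed s. (z,j) \<notin> covered s \<and> res_reach V E (covered s) j w z}"
    and I3: "\<And>p q. p\<in>processed s \<Longrightarrow> q\<in>avail V l s \<Longrightarrow> (\<lambda>(z,j). r z j) p \<le> (\<lambda>(z,j). r z j) q"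
    using inv unfolding inv123_def by blast+
  have uiV: "u\<in>V" "i<l" "(u,i) \<notin> covered s" "(u,i) \<notin> processed s" using ui unfolding avail_def by auto
  have I1': "processed s1 \<subseteq> V \<times> {..<l}" using I1 uiV P1 by auto
  have I2': "sketch s1 w = (\<lambda>(z,j). r z j) ` {(z,j) \<in> processed s1. (z,j) \<notin> covered s1 \<and> res_reach V E (covered s1) j w z}" for w
  proof -
    have "{(z,j) \<in> processed s1. (z,j) \<notin> covered s1 \<and> res_reach V E (covered s1) j w z}
      = (if res_reach V E (covered s) i w u then insert (u,i) else id)
        {(z,j) \<in> processed s. (z,j) \<notin> covered s \<and> res_reach V E (covered s) j w z}"
      using uiV by (auto simp: P1 cov)
    then show ?thesis by (simp add: X1 I2[of w])
  qed
  have I3': "\<forall>p\<in>processed s1. \<forall>q\<in>avail V l s1. (\<lambda>(z,j). r z j) p \<le> (\<lambda>(z,j). r z j) q"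
  proof (intro ballI)
    fix p q assume p: "p \<in> processed s1" and q: "q \<in> avail V l s1"
    then have q': "q \<in> avail V l s" using av by auto
    show "(\<lambda>(z,j). r z j) p \<le> (\<lambda>(z,j). r z j) q"
    proof (cases "p = (u,i)")
      case True then show ?thesis using mn q' by auto
    next
      case False then show ?thesis using p P1 I3 q' by auto
    qed
  qed
  have inv1: "inv123 V E l r s1" unfolding inv123_def using I1' I2' I3' by blast
  have H: "Hk V k s1" unfolding Hk_def
  proof (intro ballI impI)
    fix w assume w: "w \<in> V" and ge: "k \<le> card (sketch s1 w)"
    have fw: "finite (sketch s w)" using inv_fin[OF inv fin] .
    have cond: "res_reach V E (covered s) i w u"
    proof (rule ccontr)
      assume "\<not> ?thesis" then have "sketch s1 w = sketch s w" using X1 by simp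
      then show False using ge lt w by auto
    qed
    have eqX: "sketch s1 w = insert (r u i) (sketch s w)" using X1 cond by simp
    have ck: "card (sketch s1 w) = k" using eqX ge lt w fw card_insert_le_m1
      by (metis Suc_leI card_insert_if le_antisym less_imp_le_nat)
    have f1: "finite (sketch s1 w)" using inv_fin[OF inv1 fin] .
    have rm: "r u i \<le> Max (sketch s1 w)" using eqX f1 by auto
    have "\<forall>w'\<in>V. \<forall>\<rho>\<in>sketch s1 w'. \<rho> \<le> Max (sketch s1 w)"
    proof (intro ballI)
      fix w' \<rho> assume "w' \<in> V" "\<rho> \<in> sketch s1 w'"
      then have "\<rho> = r u i \<or> \<rho> \<in> sketch s w'" using X1[of w'] by (auto split: if_splits)
      then show "\<rho> \<le> Max (sketch s1 w)"
      proof
        assume "\<rho> \<in> sketch s w'"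
        then obtain z j where "(z,j) \<in> processed s" "\<rho> = r z j" using I2[of w'] by auto
        then have "\<rho> \<le> r u i" using I3[of "(z,j)" "(u,i)"] ui by auto
        then show ?thesis using rm by auto
      qed (use rm in auto)
    qed
    then show "card (sketch s1 w) = k \<and> (\<forall>w'\<in>V. \<forall>\<rho>\<in>sketch s1 w'. \<rho> \<le> Max (sketch s1 w))" using ck by auto
  qed
  show ?thesis using inv1 cov H by auto
qed

lemma scan_inv:
  "skim_scan V E l r k s s2 v b \<Longrightarrow> finite V \<Longrightarrow> inv123 V E l r s \<Longrightarrow> Hk V k s \<Longrightarrow>
    inv123 V E l r s2 \<and> covered s2 = covered s \<and> v \<in> V \<and> Hk V k s2 \<and>
    (b \<longrightarrow> card (sketch s2 v) = k) \<and> (\<not> b \<longrightarrow> (\<forall>w\<in>V. card (sketch s2 w) < k))"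
proof (induction rule: skim_scan.induct)
  case (scan_select x s) then show ?case by auto
next
  case (scan_step s s1 s2 x b)
  then have "inv123 V E l r s1 \<and> covered s1 = covered s \<and> Hk V k s1" using process_inv by blast
  then show ?case using scan_step by auto
next
  case (scan_exhausted s x) then show ?case by auto
qed


lemma update_sketch:
  assumes inv: "inv123 V E l r s1" and inj: "inj_on (\<lambda>(z, i). r z i) (V \<times> {..<l})"
  shows "sketch s1 w - sketch s1 x = (\<lambda>(z,j). r z j) ` {(z,j) \<in> processed s1.
          (z,j) \<notin> covered (residual_update V E l s1 x) \<and>
          res_reach V E (covered (residual_update V E l s1 x)) j w z}"
proof -
  define C where "C = covered s1"
  define N where "N = {(z, i). i < l \<and> res_reach V E C i x z}"
  have C': "covered (residual_update V E l s1 x) = C \<union> N"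
    unfolding residual_update_def C_def N_def by simp
  have I1: "processed s1 \<subseteq> V \<times> {..<l}" and
    I2: "\<And>w. sketch s1 w = (\<lambda>(z,j). r z j) ` {(z,j) \<in> processed s1. (z,j) \<notin> C \<and> res_reach V E C j w z}"
    using inv unfolding inv123_def C_def by blast+
  show ?thesis unfolding C'
  proof (intro equalityI subsetI)
    fix \<rho> assume "\<rho> \<in> sketch s1 w - sketch s1 x"
    then obtain z j where zj: "(z,j) \<in> processed s1" "(z,j) \<notin> C" "res_reach V E C j w z" "\<rho> = r z j"
      and nx: "\<rho> \<notin> sketch s1 x" using I2[of w] by auto
    have jl: "j < l" using zj I1 by auto
    have "\<not> res_reach V E C j x z" using nx zj I2[of x] by auto
    then have "(z,j) \<notin> C \<union> N" using zj unfolding N_def by auto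
    then have "res_reach V E (C \<union> N) j w z" using rr_residual[OF zj(3) _ jl] unfolding N_def by auto
    then show "\<rho> \<in> (\<lambda>(z,j). r z j) ` {(z,j) \<in> processed s1. (z,j) \<notin> C \<union> N \<and> res_reach V E (C \<union> N) j w z}"
      using zj \<open>(z,j) \<notin> C \<union> N\<close> by auto
  next
    fix \<rho> assume "\<rho> \<in> (\<lambda>(z,j). r z j) ` {(z,j) \<in> processed s1. (z,j) \<notin> C \<union> N \<and> res_reach V E (C \<union> N) j w z}"
    then obtain z j where zj: "(z,j) \<in> processed s1" "(z,j) \<notin> C \<union> N" "res_reach V E (C \<union> N) j w z" "\<rho> = r z j"
      by auto
    have jl: "j < l" using zj I1 by auto
    have rw: "res_reach V E C j w z" using rr_mono[OF _ zj(3)] by auto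
    have in1: "\<rho> \<in> sketch s1 w" using I2[of w] zj rw by auto
    have "\<rho> \<notin> sketch s1 x"
    proof
      assume "\<rho> \<in> sketch s1 x"
      then obtain z' j' where zj': "(z',j') \<in> processed s1" "res_reach V E C j' x z'" "\<rho> = r z' j'"
        using I2[of x] by auto
      have "(z',j') \<in> V \<times> {..<l}" "(z,j) \<in> V \<times> {..<l}" using zj zj' I1 by auto
      moreover have "(\<lambda>(z, i). r z i) (z',j') = (\<lambda>(z, i). r z i) (z,j)" using zj zj' by simp
      ultimately have "(z',j') = (z,j)" using inj unfolding inj_on_def by blast
      then show False using zj' zj jl unfolding N_def by auto
    qed
    then show "\<rho> \<in> sketch s1 w - sketch s1 x" using in1 by auto
  qed
qed

lemma reach_inv:
  assumes fin: "finite V" and inj: "inj_on (\<lambda>(z, i). r z i) (V \<times> {..<l})" and k1: "k \<ge> 1"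
  shows "skim_reachable V E l r k s \<Longrightarrow> inv123 V E l r s \<and> (\<forall>w\<in>V. card (sketch s w) < k)"
proof (induction rule: skim_reachable.induct)
  case reach_init
  show ?case using k1 unfolding inv123_def skim_init_def by auto
next
  case (reach_iter s s1 x b)
  have Hs: "Hk V k s" using reach_iter.IH unfolding Hk_def by auto
  have sc: "inv123 V E l r s1 \<and> covered s1 = covered s \<and> x \<in> V \<and> Hk V k s1 \<and>
    (b \<longrightarrow> card (sketch s1 x) = k) \<and> (\<not> b \<longrightarrow> (\<forall>w\<in>V. card (sketch s1 w) < k))"
    using scan_inv[OF reach_iter.hyps(2) fin _ Hs] reach_iter.IH by blast
  define s' where "s' = residual_update V E l s1 x"
  have inv1: "inv123 V E l r s1" using sc by blast
  have P': "processed s' = processed s1" unfolding s'_def residual_update_def by simp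
  have X': "\<And>w. sketch s' w = sketch s1 w - sketch s1 x" unfolding s'_def residual_update_def by simp
  have av: "avail V l s' \<subseteq> avail V l s1" unfolding s'_def residual_update_def avail_def by auto
  have "inv123 V E l r s'"
    unfolding inv123_def
  proof (intro conjI allI)
    show "processed s' \<subseteq> V \<times> {..<l}" using inv1 P' unfolding inv123_def by auto
  next
    fix w show "sketch s' w = (\<lambda>(z,j). r z j) ` {(z,j) \<in> processed s'. (z,j) \<notin> covered s' \<and> res_reach V E (covered s') j w z}"
      using update_sketch[OF inv1 inj, of w x] X' P' unfolding s'_def by simp
  next
    show "\<forall>p\<in>processed s'. \<forall>q\<in>avail V l s'. (\<lambda>(z,j). r z j) p \<le> (\<lambda>(z,j). r z j) q"
      using inv1 P' av unfolding inv123_def by blast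
  qed
  moreover have "\<forall>w\<in>V. card (sketch s' w) < k"
  proof
    fix w assume w: "w \<in> V"
    have fw: "finite (sketch s1 w)" using inv_fin[OF inv1 fin] .
    have cle: "card (sketch s' w) \<le> card (sketch s1 w)" using X' fw by (simp add: card_mono)
    show "card (sketch s' w) < k"
    proof (cases "card (sketch s1 w) < k")
      case True then show ?thesis using cle by auto
    next
      case False
      then have b: b using sc w by auto
      have Hw: "card (sketch s1 w) = k" "\<forall>w'\<in>V. \<forall>\<rho>\<in>sketch s1 w'. \<rho> \<le> Max (sketch s1 w)"
        using sc w False unfolding Hk_def by auto
      have Hx: "\<forall>w'\<in>V. \<forall>\<rho>\<in>sketch s1 w'. \<rho> \<le> Max (sketch s1 x)"
        using sc b unfolding Hk_def by auto
      have fx: "finite (sketch s1 x)" using inv_fin[OF inv1 fin] .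
      have nw: "sketch s1 w \<noteq> {}" using Hw k1 by auto
      have nx: "sketch s1 x \<noteq> {}" using sc b k1 by auto
      have mw: "Max (sketch s1 w) \<in> sketch s1 w" using fw nw by auto
      have mx: "Max (sketch s1 x) \<in> sketch s1 x" using fx nx by auto
      have "Max (sketch s1 w) = Max (sketch s1 x)"
        using Hw(2) Hx mw mx w sc by (meson antisym)
      then have "Max (sketch s1 w) \<in> sketch s1 x" using mx by simp
      then have "sketch s' w \<subseteq> sketch s1 w - {Max (sketch s1 w)}" using X' by auto
      then have "card (sketch s' w) \<le> k - 1" using Hw mw fw
        by (metis card_Diff_singleton card_mono finite_Diff)
      then show ?thesis using k1 by auto
    qed
  qed
  ultimately show ?case unfolding s'_def by blast
qed

theorem mainTheorem2:
  fixes V :: "'v set" and E :: "nat \<Rightarrow> ('v \<times> 'v) set" and l k :: nat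
    and r :: "'v \<Rightarrow> nat \<Rightarrow> real"
    and s s1 :: "'v skim_state" and v :: "'v"
  assumes "finite V"
    and "\<And>i. i < l \<Longrightarrow> E i \<subseteq> V \<times> V"
    and "\<And>z i. z \<in> V \<Longrightarrow> i < l \<Longrightarrow> r z i \<in> {0..1}"
    and "inj_on (\<lambda>(z, i). r z i) (V \<times> {..<l})"
    and "k \<ge> 1"
    and "skim_reachable V E l r k s"
    and "skim_scan V E l r k s s1 v True"
  shows "\<forall>u \<in> V. u \<notin> set (seeds (residual_update V E l s1 v)) \<longrightarrow>
           sketch (residual_update V E l s1 v) u =
             {\<rho> \<in> combined_sketch V E l r k (covered (residual_update V E l s1 v)) u.
                \<rho> \<le> kth_smallest k (sketch s1 v)}"
proof (intro ballI impI)
  fix u assume u: "u \<in> V"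
  note fin = assms(1) and inj = assms(4) and k1 = assms(5)
  have ri: "inv123 V E l r s \<and> (\<forall>w\<in>V. card (sketch s w) < k)" using reach_inv[OF fin inj k1 assms(6)] .
  have Hs: "Hk V k s" using ri unfolding Hk_def by auto
  have sc: "inv123 V E l r s1 \<and> covered s1 = covered s \<and> v \<in> V \<and> Hk V k s1 \<and> card (sketch s1 v) = k"
    using scan_inv[OF assms(7) fin _ Hs] ri by blast
  have inv1: "inv123 V E l r s1" using sc by blast
  have I1: "processed s1 \<subseteq> V \<times> {..<l}" and
    I2: "\<And>w. sketch s1 w = (\<lambda>(z,j). r z j) ` {(z,j) \<in> processed s1. (z,j) \<notin> covered s1 \<and> res_reach V E (covered s1) j w z}"
    and I3: "\<And>p q. p\<in>processed s1 \<Longrightarrow> q\<in>avail V l s1 \<Longrightarrow> (\<lambda>(z,j). r z j) p \<le> (\<lambda>(z,j). r z j) q"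
    using inv1 unfolding inv123_def by blast+
  define C' where "C' = covered (residual_update V E l s1 v)"
  have CC: "covered s1 \<subseteq> C'" unfolding C'_def residual_update_def by auto
  define \<tau> where "\<tau> = Max (sketch s1 v)"
  have fv: "finite (sketch s1 v)" using inv_fin[OF inv1 fin] .
  have tau: "kth_smallest k (sketch s1 v) = \<tau>" unfolding \<tau>_def using kth_max[OF fv] sc k1 by auto
  have nv: "sketch s1 v \<noteq> {}" using sc k1 by auto
  have tin: "\<tau> \<in> sketch s1 v" unfolding \<tau>_def using fv nv by auto
  have bound: "\<forall>w'\<in>V. \<forall>\<rho>\<in>sketch s1 w'. \<rho> \<le> \<tau>" using sc unfolding Hk_def \<tau>_def by auto
  have fu: "finite (sketch s1 u)" using inv_fin[OF inv1 fin] .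
  have cu: "card (sketch s1 u) \<le> k"
  proof (cases "k \<le> card (sketch s1 u)")
    case True then show ?thesis using sc u unfolding Hk_def by auto
  qed auto
  define T where "T = sketch (residual_update V E l s1 v) u"
  have T1: "T = sketch s1 u - sketch s1 v" unfolding T_def residual_update_def by simp
  have T2: "T = (\<lambda>(z,j). r z j) ` {(z,j) \<in> processed s1. (z,j) \<notin> C' \<and> res_reach V E C' j u z}"
    unfolding T1 C'_def using update_sketch[OF inv1 inj] by blast
  define S where "S = {r z i | z i. i < l \<and> res_reach V E C' i u z}"
  have B: "{\<rho>\<in>S. \<rho> \<le> \<tau>} = T"
  proof (intro equalityI subsetI)
    fix \<rho> assume "\<rho> \<in> {\<rho>\<in>S. \<rho> \<le> \<tau>}"
    then obtain z i where zi: "\<rho> = r z i" "i < l" "res_reach V E C' i u z" "\<rho> \<le> \<tau>" unfolding S_def by auto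
    have nc: "(z,i) \<notin> C'" "z \<in> V" using rr_not_cov[OF zi(3)] by auto
    have "(z,i) \<in> processed s1"
    proof (rule ccontr)
      assume np: "(z,i) \<notin> processed s1"
      then have av: "(z,i) \<in> avail V l s1" using nc zi CC unfolding avail_def by auto
      obtain p where p: "p \<in> processed s1" "\<tau> = (\<lambda>(z,j). r z j) p" using tin I2[of v] by auto
      have "\<tau> \<le> r z i" using I3[OF p(1) av] p by auto
      then have "(\<lambda>(z,j). r z j) p = (\<lambda>(z,j). r z j) (z,i)" using zi p by auto
      moreover have "p \<in> V \<times> {..<l}" "(z,i) \<in> V \<times> {..<l}" using p I1 nc zi by auto
      ultimately have "p = (z,i)" using inj unfolding inj_on_def by blast
      then show False using np p by auto
    qed
    then show "\<rho> \<in> T" unfolding T2 using zi nc by auto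
  next
    fix \<rho> assume "\<rho> \<in> T"
    then have "\<rho> \<in> sketch s1 u" and "\<rho> \<in> (\<lambda>(z,j). r z j) ` {(z,j) \<in> processed s1. (z,j) \<notin> C' \<and> res_reach V E C' j u z}"
      using T1 T2 by auto
    moreover then have "\<rho> \<le> \<tau>" using bound u by auto
    ultimately show "\<rho> \<in> {\<rho>\<in>S. \<rho> \<le> \<tau>}" unfolding S_def using I1 by fastforce
  qed
  have Cl: "{\<rho> \<in> bottom_k k S. \<rho> \<le> \<tau>} = {\<rho>\<in>S. \<rho> \<le> \<tau>}"
  proof (intro equalityI subsetI)
    fix \<rho> assume "\<rho> \<in> {\<rho> \<in> bottom_k k S. \<rho> \<le> \<tau>}" then show "\<rho> \<in> {\<rho>\<in>S. \<rho> \<le> \<tau>}"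
      unfolding bottom_k_def by auto
  next
    fix \<rho> assume rS: "\<rho> \<in> {\<rho>\<in>S. \<rho> \<le> \<tau>}"
    then have rT: "\<rho> \<in> T" using B by auto
    have sub: "{y\<in>S. y < \<rho>} \<subseteq> T - {\<rho>}" using rS B by auto
    have fT: "finite T" using T1 fu by auto
    have "card T \<le> k" using T1 cu fu by (metis Diff_subset card_mono le_trans)
    then have "card (T - {\<rho>}) < k" using rT fT k1 by (simp add: card_Diff_singleton)
    then have "card {y\<in>S. y < \<rho>} < k" using card_mono[OF _ sub] fT
      by (meson finite_Diff le_less_trans)
    then show "\<rho> \<in> {\<rho> \<in> bottom_k k S. \<rho> \<le> \<tau>}" using rS unfolding bottom_k_def by auto
  qed
  show "sketch (residual_update V E l s1 v) u =
             {\<rho> \<in> combined_sketch V E l r k (covered (residual_update V E l s1 v)) u.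
                \<rho> \<le> kth_smallest k (sketch s1 v)}"
    unfolding tau combined_sketch_def C'_def[symmetric] S_def[symmetric] Cl B T_def[symmetric] ..
qed

end
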